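(* Let $(X,\ast,u,d)$ be a finite block GL-rack, let $\Delta=\alpha_1\cdots\alpha_n$ be the disjoint cycle decomposition of its diagonal map (fixed points counted as cycles of length $1$), let $A_i=\operatorname{supp}(\alpha_i)$, and let $c=|A_i|$ (the common length). Then: (1) $x\ast y=x\ast y'$ for all $i,j$, all $x\in A_i$ and all $y,y'\in A_j$; (2) $x\ast y\neq x'\ast y$ for all $i,j$, all $x\neq x'\in A_i$ and all $y\in A_j$. Consequently, for all $i,j\in\{1,\dots,n\}$ there is $k\in\{1,\dots,n\}$ with $A_i\ast A_j:=\{x\ast y: x\in A_i,y\in A_j\}=A_k$, and in particular $A_i\ast A_i=A_i$ for every $i$.
   Context: A rack is a set $X$ with a binary operation $\ast$ such that for every $y\in X$ the map $x\mapsto x\ast y$ is a bijection of $X$ and $(x\ast y)\ast z=(x\ast z)\ast(y\ast z)$ for all $x,y,z$. A GL-rack is a quadruple $(X,\ast,u,d)$ where $(X,\ast)$ is a rack and $u,d\colon X\to X$ are maps such that for all $x,y\in X$: $u(d(x\ast x))=d(u(x\ast x))=x$; $u(x\ast y)=u(x)\ast y$ and $d(x\ast y)=d(x)\ast y$; $x\ast u(y)=x\ast d(y)=x\ast y$. The diagonal map is $\Delta\colon X\to X$, $\Delta(x)=x\ast x$; for a finite GL-rack it is a bijection (a rack automorphism) and $\Delta=(u\circ d)^{-1}$. A finite GL-rack is a block GL-rack if all cycles in the disjoint cycle decomposition of the permutation $\Delta$ (including cycles of length $1$) have the same length. *)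

theory Defs
  imports Main
begin

definition rack :: "('a \<Rightarrow> 'a \<Rightarrow> 'a) \<Rightarrow> bool" where
  "rack op \<longleftrightarrow> (\<forall>y. bij (\<lambda>x. op x y)) \<and>
     (\<forall>x y z. op (op x y) z = op (op x z) (op y z))"

definition gl_rack :: "('a \<Rightarrow> 'a \<Rightarrow> 'a) \<Rightarrow> ('a \<Rightarrow> 'a) \<Rightarrow> ('a \<Rightarrow> 'a) \<Rightarrow> bool" where
  "gl_rack op u d \<longleftrightarrow> rack op \<and>
     (\<forall>x. u (d (op x x)) = x \<and> d (u (op x x)) = x) \<and>
     (\<forall>x y. u (op x y) = op (u x) y \<and> d (op x y) = op (d x) y) \<and>
     (\<forall>x y. op x (u y) = op x y \<and> op x (d y) = op x y)"

definition diag :: "('a \<Rightarrow> 'a \<Rightarrow> 'a) \<Rightarrow> 'a \<Rightarrow> 'a" where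
  "diag op x = op x x"

definition diag_cycle :: "('a \<Rightarrow> 'a \<Rightarrow> 'a) \<Rightarrow> 'a \<Rightarrow> 'a set" where
  "diag_cycle op x = {(diag op ^^ k) x | k. True}"

text \<open>Supports of all cycles (including fixed points) of the disjoint cycle decomposition.\<close>
definition diag_cycles :: "('a \<Rightarrow> 'a \<Rightarrow> 'a) \<Rightarrow> 'a set set" where
  "diag_cycles op = range (diag_cycle op)"

definition block_gl_rack :: "('a::finite \<Rightarrow> 'a \<Rightarrow> 'a) \<Rightarrow> ('a \<Rightarrow> 'a) \<Rightarrow> ('a \<Rightarrow> 'a) \<Rightarrow> bool" where
  "block_gl_rack op u d \<longleftrightarrow> gl_rack op u d \<and>
     (\<forall>A\<in>diag_cycles op. \<forall>B\<in>diag_cycles op. card A = card B)"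

definition set_op :: "('a \<Rightarrow> 'a \<Rightarrow> 'a) \<Rightarrow> 'a set \<Rightarrow> 'a set \<Rightarrow> 'a set" where
  "set_op op A B = {op x y | x y. x \<in> A \<and> y \<in> B}"

end

theory Submission
  imports Defs
begin

lemma sd: assumes "rack op" shows "op (op x y) z = op (op x z) (op y z)"
proof -
  have "\<forall>x y z. op (op x y) z = op (op x z) (op y z)" using assms unfolding rack_def by (rule conjunct2)
  then show ?thesis by blast
qed

lemma rbij: assumes "rack op" shows "bij (\<lambda>x. op x y)"
proof -
  have "\<forall>y. bij (\<lambda>x. op x y)" using assms unfolding rack_def by (rule conjunct1)
  then show ?thesis by (rule spec)
qed

lemma rinj: assumes "rack op" "op x y = op x' y" shows "x = x'"
proof -
  have "inj (\<lambda>x. op x y)" using rbij[OF assms(1)] by (rule bij_is_inj)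
  then show ?thesis using assms(2) by (rule injD)
qed

lemma rsurj: assumes "rack op" shows "\<exists>w. x = op w y"
proof -
  have "surj (\<lambda>x. op x y)" using rbij[OF assms(1)] by (rule bij_is_surj)
  then show ?thesis by (rule surjD)
qed

lemma L1: assumes "rack op" shows "op x (op y y) = op x y"
proof -
  obtain w where w: "x = op w y" using rsurj[OF assms] by blast
  show ?thesis unfolding w using sd[OF assms, of w y y] by simp
qed

lemma L1k: assumes "rack op" shows "op x ((diag op ^^ k) y) = op x y"
  by (induction k) (auto simp: diag_def L1[OF assms])

lemma L2k: assumes "rack op" shows "(diag op ^^ k) (op x y) = op ((diag op ^^ k) x) y"
proof (induction k)
  case 0 show ?case by simp
next
  case (Suc k)
  have D: "\<And>x. diag op (op x y) = op (diag op x) y"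
    using sd[OF assms] unfolding diag_def by metis
  show ?case using Suc by (simp add: D)
qed

lemma setop_cycle: assumes "rack op"
  shows "set_op op (diag_cycle op a) (diag_cycle op b) = diag_cycle op (op a b)"
proof
  show "set_op op (diag_cycle op a) (diag_cycle op b) \<subseteq> diag_cycle op (op a b)"
  proof
    fix z assume "z \<in> set_op op (diag_cycle op a) (diag_cycle op b)"
    then obtain k l where "z = op ((diag op ^^ k) a) ((diag op ^^ l) b)"
      unfolding set_op_def diag_cycle_def by blast
    then have "z = (diag op ^^ k) (op a b)" by (simp only: L1k[OF assms] L2k[OF assms])
    then show "z \<in> diag_cycle op (op a b)" unfolding diag_cycle_def by blast
  qed
next
  show "diag_cycle op (op a b) \<subseteq> set_op op (diag_cycle op a) (diag_cycle op b)"
  proof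
    fix z assume "z \<in> diag_cycle op (op a b)"
    then obtain k where "z = (diag op ^^ k) (op a b)" unfolding diag_cycle_def by blast
    then have "z = op ((diag op ^^ k) a) ((diag op ^^ 0) b)" by (simp only: L1k[OF assms] L2k[OF assms])
    then show "z \<in> set_op op (diag_cycle op a) (diag_cycle op b)"
      unfolding set_op_def diag_cycle_def by blast
  qed
qed

lemma diag_inj: assumes "gl_rack op u d" shows "inj (diag op)"
proof (rule injI)
  fix x y assume "diag op x = diag op y"
  moreover have h: "\<forall>x. u (d (op x x)) = x" using assms unfolding gl_rack_def by blast
  ultimately have "u (d (op x x)) = u (d (op y y))" unfolding diag_def by simp
  then show "x = y" using h by simp
qed

lemma cycle_back:
  fixes f :: "'a::finite \<Rightarrow> 'a"
  assumes "inj f" shows "\<exists>m>0. (f ^^ m) a = a"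
proof -
  have "\<not> inj (\<lambda>k::nat. (f ^^ k) a)"
  proof
    assume "inj (\<lambda>k::nat. (f ^^ k) a)"
    then have "finite (UNIV::nat set)"
      using finite_imageD[of "\<lambda>k::nat. (f ^^ k) a" UNIV] by simp
    then show False by simp
  qed
  then obtain i j where ij: "i \<noteq> j" "(f ^^ i) a = (f ^^ j) a" unfolding inj_def by blast
  have gen: "\<And>i j. i < j \<Longrightarrow> (f ^^ i) a = (f ^^ j) a \<Longrightarrow> (f ^^ (j - i)) a = a"
  proof -
    fix i j :: nat assume "i < j" "(f ^^ i) a = (f ^^ j) a"
    have e: "(f ^^ i) ((f ^^ (j - i)) a) = (f ^^ (i + (j - i))) a" by (simp add: funpow_add)
    have "i + (j - i) = j" using \<open>i < j\<close> by simp
    then have "(f ^^ i) a = (f ^^ i) ((f ^^ (j - i)) a)" using e \<open>(f ^^ i) a = (f ^^ j) a\<close> by simp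
    moreover have "inj (f ^^ i)" using assms by (simp add: inj_fn)
    ultimately show "(f ^^ (j - i)) a = a" by (metis injD)
  qed
  show ?thesis
  proof (cases "i < j")
    case True then show ?thesis using gen[of i j] ij by (intro exI[of _ "j - i"]) simp
  next
    case False then have "j < i" using ij by simp
    then show ?thesis using gen[of j i] ij by (intro exI[of _ "i - j"]) simp
  qed
qed

lemma cycle_diag: assumes "gl_rack op u d"
  shows "diag_cycle op (diag op a) = diag_cycle op (a::'a::finite)"
proof -
  obtain m where m: "m > 0" "(diag op ^^ m) a = a" using cycle_back[OF diag_inj[OF assms]] by blast
  have "a = (diag op ^^ (m - 1)) (diag op a)"
  proof -
    have "Suc (m - 1) = m" using m by simp
    moreover have "(diag op ^^ (Suc (m - 1))) a = (diag op ^^ (m - 1)) (diag op a)"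
      by (simp only: funpow_Suc_right o_apply)
    ultimately have "(diag op ^^ m) a = (diag op ^^ (m - 1)) (diag op a)" by (simp only:)
    then show ?thesis using m by simp
  qed
  show ?thesis
  proof
    show "diag_cycle op (diag op a) \<subseteq> diag_cycle op a"
    proof
      fix z assume "z \<in> diag_cycle op (diag op a)"
      then obtain k where k: "z = (diag op ^^ k) (diag op a)" unfolding diag_cycle_def by blast
      have "z = (diag op ^^ (Suc k)) a" using k by (simp only: funpow_Suc_right o_apply)
      then show "z \<in> diag_cycle op a" unfolding diag_cycle_def by blast
    qed
  next
    show "diag_cycle op a \<subseteq> diag_cycle op (diag op a)"
    proof
      fix z assume "z \<in> diag_cycle op a"
      then obtain k where k: "z = (diag op ^^ k) a" unfolding diag_cycle_def by blast
      have "z = (diag op ^^ (k + (m - 1))) (diag op a)"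
      proof -
        have "z = (diag op ^^ k) ((diag op ^^ (m - 1)) (diag op a))" using k \<open>a = _\<close> by simp
        then show ?thesis by (simp add: funpow_add)
      qed
      then show "z \<in> diag_cycle op (diag op a)" unfolding diag_cycle_def by blast
    qed
  qed
qed

theorem proposition3p3:
  fixes op :: "'a::finite \<Rightarrow> 'a \<Rightarrow> 'a" and u d :: "'a \<Rightarrow> 'a"
  assumes "block_gl_rack op u d"
  shows "(\<forall>A\<in>diag_cycles op. \<forall>B\<in>diag_cycles op. \<forall>x\<in>A. \<forall>y\<in>B. \<forall>y'\<in>B. op x y = op x y')
    \<and> (\<forall>A\<in>diag_cycles op. \<forall>B\<in>diag_cycles op. \<forall>x\<in>A. \<forall>x'\<in>A. \<forall>y\<in>B.
          x \<noteq> x' \<longrightarrow> op x y \<noteq> op x' y)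
    \<and> (\<forall>A\<in>diag_cycles op. \<forall>B\<in>diag_cycles op. \<exists>C\<in>diag_cycles op. set_op op A B = C)
    \<and> (\<forall>A\<in>diag_cycles op. set_op op A A = A)"
proof -
  have gl: "gl_rack op u d" using assms unfolding block_gl_rack_def by blast
  then have r: "rack op" unfolding gl_rack_def by blast
  have 1: "\<forall>A\<in>diag_cycles op. \<forall>B\<in>diag_cycles op. \<forall>x\<in>A. \<forall>y\<in>B. \<forall>y'\<in>B. op x y = op x y'"
  proof (intro ballI)
    fix A B x y y' assume "A \<in> diag_cycles op" "B \<in> diag_cycles op" "x \<in> A" "y \<in> B" "y' \<in> B"
    then obtain b where b: "B = diag_cycle op b" unfolding diag_cycles_def by blast
    obtain k l where "y = (diag op ^^ k) b" "y' = (diag op ^^ l) b" using b \<open>y \<in> B\<close> \<open>y' \<in> B\<close>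
      unfolding diag_cycle_def by blast
    then show "op x y = op x y'" by (simp only: L1k[OF r])
  qed
  have 2: "\<forall>A\<in>diag_cycles op. \<forall>B\<in>diag_cycles op. \<forall>x\<in>A. \<forall>x'\<in>A. \<forall>y\<in>B.
          x \<noteq> x' \<longrightarrow> op x y \<noteq> op x' y"
  proof (intro ballI impI)
    fix A B :: "'a set" and x x' y :: 'a assume "x \<noteq> x'"
    then show "op x y \<noteq> op x' y" using rinj[OF r, of x y x'] by blast
  qed
  have 3: "\<forall>A\<in>diag_cycles op. \<forall>B\<in>diag_cycles op. \<exists>C\<in>diag_cycles op. set_op op A B = C"
  proof (intro ballI)
    fix A B assume "A \<in> diag_cycles op" "B \<in> diag_cycles op"
    then obtain a b where "A = diag_cycle op a" "B = diag_cycle op b" unfolding diag_cycles_def by blast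
    then have "set_op op A B = diag_cycle op (op a b)" by (simp only: setop_cycle[OF r])
    then show "\<exists>C\<in>diag_cycles op. set_op op A B = C" unfolding diag_cycles_def by blast
  qed
  have 4: "\<forall>A\<in>diag_cycles op. set_op op A A = A"
  proof
    fix A assume "A \<in> diag_cycles op"
    then obtain a where a: "A = diag_cycle op a" unfolding diag_cycles_def by blast
    have "set_op op A A = diag_cycle op (diag op a)" unfolding a setop_cycle[OF r] diag_def ..
    then show "set_op op A A = A" using cycle_diag[OF gl] a by simp
  qed
  show ?thesis by (rule conjI[OF 1 conjI[OF 2 conjI[OF 3 4]]])
qed

end
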